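(* Let $\mathcal{B}\subseteq\mathcal{C}^n$. Let $\mathcal{L}$ be a family of polyhedra belonging to $\mathcal{C}^n$, and suppose there is $m\in\mathbb{N}$ such that every $L\in\mathcal{L}$ has at most $m$ facets. Then: (a) If $\mathcal{B}$ is $f$-closed for a fixed $f\in\mathbb{R}^n\setminus\mathbb{Z}^n$, then $\rho_f(\mathcal{B},\mathcal{L})<\infty$ if and only if there exists $\mu\in(0,1)$ such that for every $L\in\mathcal{L}_f$ some $B\in\mathcal{B}$ satisfies $B\supseteq\mu L+(1-\mu)f$. (b) If $\mathcal{B}$ is $f$-closed for all $f\in\mathbb{R}^n\setminus\mathbb{Z}^n$, then $\rho(\mathcal{B},\mathcal{L})<\infty$ if and only if there exists $\mu\in(0,1)$ such that for every $f\in\mathbb{R}^n\setminus\mathbb{Z}^n$ and every $L\in\mathcal{L}_f$ some $B\in\mathcal{B}$ satisfies $B\supseteq\mu L+(1-\mu)f$.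
   Context: $\mathcal{C}^n$ is the family of all $n$-dimensional closed convex subsets of $\mathbb{R}^n$. For $B\in\mathcal{C}^n$ with $0\in\operatorname{int}(B)$, $\psi_B(r)=\inf\{\lambda>0:r\in\lambda B\}$. For $k\in\mathbb{N}$, $R=(r_1,\dots,r_k)\in\mathbb{R}^{n\times k}$, $f\in\mathbb{R}^n\setminus\mathbb{Z}^n$, $B\in\mathcal{C}^n$: if $f\in\operatorname{int}(B)$, $C_B(R,f)=\{s\in\mathbb{R}^k_{\ge0}:\sum_j s_j\psi_{B-f}(r_j)\ge1\}$, otherwise $C_B(R,f)=\mathbb{R}^k_{\ge0}$; for $\mathcal{B}\subseteq\mathcal{C}^n$, $C_{\mathcal{B}}(R,f)=\bigcap_{B\in\mathcal{B}}C_B(R,f)$ ($=\mathbb{R}^k_{\ge0}$ if $\mathcal{B}=\emptyset$). For $\mathcal{B},\mathcal{L}\subseteq\mathcal{C}^n$, $\rho_f(\mathcal{B},\mathcal{L})=\inf\{\alpha>0:C_{\mathcal{B}}(R,f)\subseteq\frac1\alpha C_{\mathcal{L}}(R,f)$ for all $k$ and all $R\in\mathbb{R}^{n\times k}\}$ and $\rho(\mathcal{B},\mathcal{L})=\sup_{f\in\mathbb{R}^n\setminus\mathbb{Z}^n}\rho_f(\mathcal{B},\mathcal{L})$. For a family $\mathcal{B}\subseteq\mathcal{C}^n$, $\mathcal{B}_f$ is the subfamily of sets in $\mathcal{B}$ containing $f$ in the interior, and $\mathcal{C}^n_f$ is the family of sets in $\mathcal{C}^n$ containing $f$ in the interior.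 $\mathcal{B}$ is $f$-closed if the family $\{\psi_{B-f}:B\in\mathcal{B}_f\}$ is closed under pointwise convergence within the family $\{\psi_{C-f}:C\in\mathcal{C}^n_f\}$, i.e. whenever $B_t\in\mathcal{B}_f$, $C\in\mathcal{C}^n_f$ and $\psi_{B_t-f}\to\psi_{C-f}$ pointwise, then $C\in\mathcal{B}_f$. *)

theory Defs
  imports "HOL-Analysis.Analysis"
begin

definition Cn :: "(real^'n) set set" where
  "Cn = {B. closed B \<and> convex B \<and> aff_dim B = int CARD('n)}"

definition Zn :: "(real^'n) set" where
  "Zn = {x. \<forall>i. x $ i \<in> \<int>}"

definition psi :: "(real^'n) set \<Rightarrow> real^'n \<Rightarrow> real" where
  "psi B r = Inf {l. l > 0 \<and> r \<in> (\<lambda>x. l *\<^sub>R x) ` B}"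

definition transl :: "(real^'n) set \<Rightarrow> real^'n \<Rightarrow> (real^'n) set" where
  "transl B f = (\<lambda>x. x - f) ` B"

text \<open>The nonnegative orthant R^k_{>=0}; vectors s in R^k are represented as
  functions nat => real vanishing outside {0..<k}.\<close>
definition orth :: "nat \<Rightarrow> (nat \<Rightarrow> real) set" where
  "orth k = {s. (\<forall>j<k. 0 \<le> s j) \<and> (\<forall>j\<ge>k. s j = 0)}"

text \<open>C_B(R,f), with R = (r_0,...,r_{k-1}) given by r :: nat => real^n.\<close>
definition CB :: "(real^'n) set \<Rightarrow> nat \<Rightarrow> (nat \<Rightarrow> real^'n) \<Rightarrow> real^'n \<Rightarrow> (nat \<Rightarrow> real) set" where
  "CB B k r f = (if f \<in> interior B
      then {s \<in> orth k. (\<Sum>j<k. s j * psi (transl B f) (r j)) \<ge> 1}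
      else orth k)"

text \<open>C_{family}(R,f) (equal to the orthant for the empty family).\<close>
definition CFam :: "(real^'n) set set \<Rightarrow> nat \<Rightarrow> (nat \<Rightarrow> real^'n) \<Rightarrow> real^'n \<Rightarrow> (nat \<Rightarrow> real) set" where
  "CFam \<B> k r f = orth k \<inter> (\<Inter>B\<in>\<B>. CB B k r f)"

definition sscale :: "real \<Rightarrow> (nat \<Rightarrow> real) set \<Rightarrow> (nat \<Rightarrow> real) set" where
  "sscale c C = (\<lambda>s j. c * s j) ` C"

text \<open>rho_f(B,L) as an extended real (infimum of the empty set is +infinity).\<close>
definition rho_f :: "real^'n \<Rightarrow> (real^'n) set set \<Rightarrow> (real^'n) set set \<Rightarrow> ereal" where
  "rho_f f \<B> \<L> = Inf (ereal ` {a. a > 0 \<and>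
      (\<forall>k::nat. k \<ge> 1 \<longrightarrow> (\<forall>r::nat \<Rightarrow> real^'n.
          CFam \<B> k r f \<subseteq> sscale (1 / a) (CFam \<L> k r f)))})"

definition rho :: "(real^'n) set set \<Rightarrow> (real^'n) set set \<Rightarrow> ereal" where
  "rho \<B> \<L> = (SUP f\<in>(UNIV - Zn). rho_f f \<B> \<L>)"

definition fam_at :: "(real^'n) set set \<Rightarrow> real^'n \<Rightarrow> (real^'n) set set" where
  "fam_at \<B> f = {B \<in> \<B>. f \<in> interior B}"

definition f_closed :: "real^'n \<Rightarrow> (real^'n) set set \<Rightarrow> bool" where
  "f_closed f \<B> \<longleftrightarrow>
     (\<forall>(Bs :: nat \<Rightarrow> (real^'n) set) C.
        (\<forall>t. Bs t \<in> fam_at \<B> f) \<and> C \<in> fam_at Cn f \<and>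
        (\<forall>x. (\<lambda>t. psi (transl (Bs t) f) x) \<longlonglongrightarrow> psi (transl C f) x)
        \<longrightarrow> C \<in> fam_at \<B> f)"

definition shrink :: "real \<Rightarrow> (real^'n) set \<Rightarrow> real^'n \<Rightarrow> (real^'n) set" where
  "shrink \<mu> L f = (\<lambda>x. \<mu> *\<^sub>R x + (1 - \<mu>) *\<^sub>R f) ` L"

end

theory Submission
  imports Defs "HOL-Complex_Analysis.Great_Picard"
begin
lemma mem_scale_iff:
  fixes D :: "(real^'n) set"
  assumes "l \<noteq> 0"
  shows "x \<in> (\<lambda>z. l *\<^sub>R z) ` D \<longleftrightarrow> (1/l) *\<^sub>R x \<in> D"
proof
  assume "x \<in> (\<lambda>z. l *\<^sub>R z) ` D"
  then obtain z where "z \<in> D" "x = l *\<^sub>R z" by auto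
  then show "(1/l) *\<^sub>R x \<in> D" using assms by simp
next
  assume "(1/l) *\<^sub>R x \<in> D"
  moreover have "x = l *\<^sub>R ((1/l) *\<^sub>R x)" using assms by simp
  ultimately show "x \<in> (\<lambda>z. l *\<^sub>R z) ` D" by blast
qed

definition pset :: "(real^'n) set \<Rightarrow> real^'n \<Rightarrow> real set" where
  "pset D x = {l. l > 0 \<and> x \<in> (\<lambda>z. l *\<^sub>R z) ` D}"

lemma psi_pset: "psi D x = Inf (pset D x)"
  by (simp add: psi_def pset_def)

lemma pset_bdd: "bdd_below (pset D x)"
  unfolding pset_def by (rule bdd_belowI[of _ 0]) auto

lemma pset_nonempty:
  fixes D :: "(real^'n) set"
  assumes "ball 0 d \<subseteq> D" "d > 0"
  shows "norm x / d + 1 \<in> pset D x"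
proof -
  let ?l = "norm x / d + 1"
  have "norm x / d \<ge> 0" using assms by simp
  then have lpos: "?l > 0" by linarith
  have "norm ((1/?l) *\<^sub>R x) = norm x / ?l" using lpos by simp
  also have "\<dots> < d"
  proof -
    have "norm x < d * ?l" using assms by (simp add: field_simps)
    then show ?thesis using lpos by (simp add: divide_less_eq mult.commute)
  qed
  finally have "(1/?l) *\<^sub>R x \<in> D" using assms(1) by (auto simp: dist_norm)
  then show ?thesis using lpos by (simp add: pset_def mem_scale_iff)
qed

lemma psi_ge0:
  assumes "pset D x \<noteq> {}"
  shows "psi D x \<ge> 0"
  unfolding psi_pset using assms by (intro cInf_greatest) (auto simp: pset_def)

lemma psi_le: "l \<in> pset D x \<Longrightarrow> psi D x \<le> l"
  unfolding psi_pset by (rule cInf_lower[OF _ pset_bdd])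

lemma pset_mono:
  fixes D :: "(real^'n) set"
  assumes "convex D" "0 \<in> D" "l \<in> pset D x" "l \<le> l'"
  shows "l' \<in> pset D x"
proof -
  have lp: "l > 0" and xl: "(1/l) *\<^sub>R x \<in> D" using assms(3) by (auto simp: pset_def mem_scale_iff)
  have l'p: "l' > 0" using lp assms(4) by linarith
  have m1: "(l/l') *\<^sub>R ((1/l) *\<^sub>R x) + (1 - l/l') *\<^sub>R 0 \<in> D"
  proof (rule convexD[OF assms(1) xl assms(2)])
    show "0 \<le> l/l'" using lp l'p by simp
    show "0 \<le> 1 - l/l'" using lp l'p assms(4) by simp
  qed simp
  moreover have e1: "l/l' * (1/l) = 1/l'" using lp by simp
  have eq2: "(l/l') *\<^sub>R ((1/l) *\<^sub>R x) + (1 - l/l') *\<^sub>R 0 = (1/l') *\<^sub>R x"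
    using e1 by (simp only: scaleR_scaleR scaleR_zero_right add_0_right)
  have "(1/l') *\<^sub>R x \<in> D" using m1 unfolding eq2 .
  then show ?thesis using l'p mem_scale_iff[of l' x D] by (simp add: pset_def)
qed

lemma psi_lt_mem:
  fixes D :: "(real^'n) set"
  assumes "convex D" "0 \<in> D" "pset D x \<noteq> {}" "psi D x < K"
  shows "K \<in> pset D x"
proof -
  obtain l where "l \<in> pset D x" "l < K"
    using assms(3,4) unfolding psi_pset by (meson cInf_lessD)
  then show ?thesis using pset_mono[OF assms(1,2)] by auto
qed

lemma psi_bound:
  fixes D :: "(real^'n) set"
  assumes "ball 0 d \<subseteq> D" "d > 0" "convex D"
  shows "psi D x \<le> norm x / d"
proof (rule field_le_epsilon)
  fix e :: real assume e: "e > 0"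
  have 0: "0 \<in> D" using assms by auto
  have "norm x / d + 1 \<in> pset D x" by (rule pset_nonempty[OF assms(1,2)])
  hence ne: "pset D x \<noteq> {}" by auto
  show "psi D x \<le> norm x / d + e"
  proof (rule psi_le)
    let ?l = "norm x / d + e"
    have "norm x / d \<ge> 0" using assms by simp
    then have lpos: "?l > 0" using e by linarith
    have "norm ((1/?l) *\<^sub>R x) = norm x / ?l" using lpos by simp
    also have "\<dots> < d"
    proof -
      have "norm x < d * ?l" using assms e by (simp add: field_simps)
      then show ?thesis using lpos by (simp add: divide_less_eq mult.commute)
    qed
    finally have "(1/?l) *\<^sub>R x \<in> D" using assms(1) by (auto simp: dist_norm)
    then show "?l \<in> pset D x" using lpos by (simp add: pset_def mem_scale_iff)
  qed
qed

lemma psi_conv: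
  fixes D :: "(real^'n) set"
  assumes "ball 0 d \<subseteq> D" "d > 0" "convex D" "u \<ge> 0" "v \<ge> 0"
  shows "psi D (u *\<^sub>R x + v *\<^sub>R y) \<le> u * psi D x + v * psi D y"
proof -
  have 0: "0 \<in> D" using assms by auto
  have nex: "pset D x \<noteq> {}" and ney: "pset D y \<noteq> {}"
    using pset_nonempty[OF assms(1,2)] by blast+
  have key: "psi D (u *\<^sub>R x + v *\<^sub>R y) \<le> u * l1 + v * l2"
    if l1: "l1 \<in> pset D x" and l2: "l2 \<in> pset D y" for l1 l2
  proof -
    have p1: "l1 > 0" and x1: "(1/l1) *\<^sub>R x \<in> D" using l1 by (auto simp: pset_def mem_scale_iff)
    have p2: "l2 > 0" and y2: "(1/l2) *\<^sub>R y \<in> D" using l2 by (auto simp: pset_def mem_scale_iff)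
    show ?thesis
    proof (cases "u * l1 + v * l2 = 0")
      case True
      have "u * l1 \<ge> 0" "v * l2 \<ge> 0" using p1 p2 assms(4,5) by simp_all
      then have "u * l1 = 0" "v * l2 = 0" using True by linarith+
      then have "u = 0" "v = 0" using p1 p2 by simp_all
      then have z: "u *\<^sub>R x + v *\<^sub>R y = 0" by simp
      have "psi D 0 \<le> 0"
      proof (rule field_le_epsilon)
        fix e :: real assume "e > 0"
        then have "e \<in> pset D 0" using 0 by (simp add: pset_def mem_scale_iff)
        then show "psi D 0 \<le> 0 + e" using psi_le by auto
      qed
      then show ?thesis using z True by simp
    next
      case False
      define S where "S = u * l1 + v * l2"
      have "u * l1 \<ge> 0" "v * l2 \<ge> 0" using p1 p2 assms(4,5) by simp_all
      then have Sp: "S > 0" using False unfolding S_def by linarith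
      have "(u * l1 / S) *\<^sub>R ((1/l1) *\<^sub>R x) + (v * l2 / S) *\<^sub>R ((1/l2) *\<^sub>R y) \<in> D"
      proof (rule convexD[OF assms(3) x1 y2])
        show "0 \<le> u * l1 / S" "0 \<le> v * l2 / S" using Sp p1 p2 assms(4,5) by simp_all
        show "u * l1 / S + v * l2 / S = 1" using Sp by (simp add: add_divide_distrib[symmetric] S_def)
      qed
      moreover have "(u * l1 / S) *\<^sub>R ((1/l1) *\<^sub>R x) + (v * l2 / S) *\<^sub>R ((1/l2) *\<^sub>R y)
          = (1/ S) *\<^sub>R (u *\<^sub>R x + v *\<^sub>R y)"
        using p1 p2 by (simp add: scaleR_add_right)
      ultimately have "S \<in> pset D (u *\<^sub>R x + v *\<^sub>R y)" using Sp by (simp add: pset_def mem_scale_iff)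
      then show ?thesis using psi_le S_def by simp
    qed
  qed
  show ?thesis
  proof (rule field_le_epsilon)
    fix e :: real assume e: "e > 0"
    obtain l1 where l1: "l1 \<in> pset D x" "l1 < psi D x + e / (u + v + 1)"
    proof -
      have "e / (u + v + 1) > 0" using e assms(4,5) by simp
      then show ?thesis using that nex unfolding psi_pset by (meson cInf_lessD less_add_same_cancel1)
    qed
    obtain l2 where l2: "l2 \<in> pset D y" "l2 < psi D y + e / (u + v + 1)"
    proof -
      have "e / (u + v + 1) > 0" using e assms(4,5) by simp
      then show ?thesis using that ney unfolding psi_pset by (meson cInf_lessD less_add_same_cancel1)
    qed
    have "psi D (u *\<^sub>R x + v *\<^sub>R y) \<le> u * l1 + v * l2" by (rule key[OF l1(1) l2(1)])
    also have "\<dots> \<le> u * (psi D x + e / (u + v + 1)) + v * (psi D y + e / (u + v + 1))"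
      using l1 l2 assms(4,5) by (intro add_mono mult_left_mono) auto
    also have "\<dots> = u * psi D x + v * psi D y + (u + v) * (e / (u + v + 1))"
      by (simp add: distrib_left distrib_right add_divide_distrib)
    also have "\<dots> \<le> u * psi D x + v * psi D y + e"
    proof -
      have "(u + v) * (e / (u + v + 1)) \<le> e"
        using e assms(4,5) by (simp add: field_simps)
      then show ?thesis by simp
    qed
    finally show "psi D (u *\<^sub>R x + v *\<^sub>R y) \<le> u * psi D x + v * psi D y + e" .
  qed
qed

lemma psi_homog:
  fixes D :: "(real^'n) set"
  assumes "ball 0 d \<subseteq> D" "d > 0" "convex D" "c > 0"
  shows "psi D (c *\<^sub>R x) = c * psi D x"
proof -
  have 1: "psi D (c *\<^sub>R x) \<le> c * psi D x"
    using psi_conv[OF assms(1,2,3), of c 0 x 0] assms(4) by simp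
  have "psi D x = psi D ((1/c) *\<^sub>R (c *\<^sub>R x))" using assms(4) by simp
  also have "\<dots> \<le> (1/c) * psi D (c *\<^sub>R x)"
    using psi_conv[OF assms(1,2,3), of "1/c" 0 "c *\<^sub>R x" 0] assms(4) by simp
  finally have "c * psi D x \<le> psi D (c *\<^sub>R x)" using assms(4) by (simp add: field_simps)
  with 1 show ?thesis by simp
qed

lemma psi_nonneg:
  fixes D :: "(real^'n) set"
  assumes "ball 0 d \<subseteq> D" "d > 0"
  shows "psi D x \<ge> 0"
  using psi_ge0 pset_nonempty[OF assms] by blast

lemma psi_lip:
  fixes D :: "(real^'n) set"
  assumes "ball 0 d \<subseteq> D" "d > 0" "convex D"
  shows "\<bar>psi D x - psi D y\<bar> \<le> norm (x - y) / d"
proof -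
  have a: "psi D x \<le> psi D y + norm (x - y) / d" for x y
  proof -
    have "psi D x = psi D (1 *\<^sub>R y + 1 *\<^sub>R (x - y))" by simp
    also have "\<dots> \<le> 1 * psi D y + 1 * psi D (x - y)" by (rule psi_conv[OF assms]) auto
    also have "\<dots> \<le> psi D y + norm (x - y) / d" using psi_bound[OF assms, of "x - y"] by simp
    finally show ?thesis .
  qed
  show ?thesis using a[of x y] a[of y x] by (simp add: norm_minus_commute abs_le_iff)
qed

lemma psi_sublevel:
  fixes g :: "real^'n \<Rightarrow> real"
  assumes nn: "\<And>x. g x \<ge> 0" and hom: "\<And>c x. c > 0 \<Longrightarrow> g (c *\<^sub>R x) = c * g x"
  shows "psi {x. g x \<le> 1} x = g x"
proof -
  have "pset {x. g x \<le> 1} x = {l. l > 0 \<and> g x \<le> l}"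
  proof (rule set_eqI)
    fix l
    show "l \<in> pset {x. g x \<le> 1} x \<longleftrightarrow> l \<in> {l. l > 0 \<and> g x \<le> l}"
    proof (cases "l > 0")
      case True
      then have e: "g ((1/l) *\<^sub>R x) = g x / l" using hom[of "1/l" x] by simp
      have "l \<in> pset {x. g x \<le> 1} x \<longleftrightarrow> g ((1/l) *\<^sub>R x) \<le> 1"
        using True mem_scale_iff[of l x "{x. g x \<le> 1}"] unfolding pset_def by simp
      also have "\<dots> \<longleftrightarrow> g x \<le> l" unfolding e using True by (simp add: divide_le_eq)
      finally show ?thesis using True by simp
    next
      case False
      then show ?thesis unfolding pset_def by simp
    qed
  qed
  moreover have "Inf {l. l > 0 \<and> g x \<le> l} = g x"
  proof (cases "g x = 0")
    case True
    then have "{l. l > 0 \<and> g x \<le> l} = {0<..}" by auto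
    then show ?thesis using True cInf_greaterThan[of "0::real"] by metis
  next
    case False
    then have "{l. l > 0 \<and> g x \<le> l} = {g x..}" using nn[of x] by auto
    then show ?thesis using cInf_atLeast[of "g x"] by metis
  qed
  ultimately show ?thesis unfolding psi_pset by metis
qed


lemma equi_lip_subseq:
  fixes g :: "nat \<Rightarrow> real^'n \<Rightarrow> real"
  assumes bd: "\<And>t x. \<bar>g t x\<bar> \<le> c * norm x"
      and lip: "\<And>t x y. \<bar>g t x - g t y\<bar> \<le> c * norm (x - y)"
      and c: "c > 0"
  obtains k where "strict_mono k" "\<And>x. convergent (\<lambda>t. g (k t) x)"
proof -
  obtain T :: "(real^'n) set" where T: "countable T" "T \<subseteq> UNIV" "UNIV \<subseteq> closure T"
    by (rule separable)
  define h where "h t x = g t x / (1 + norm x)" for t x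
  have hb: "norm (h t x) \<le> c" if "x \<in> T" for t x
  proof -
    have p: "1 + norm x > 0" by (simp add: add_pos_nonneg)
    have "c * norm x \<le> c * (1 + norm x)" using c by simp
    then have "\<bar>g t x\<bar> \<le> c * (1 + norm x)" using bd[of t x] by linarith
    then have "\<bar>g t x\<bar> / (1 + norm x) \<le> c" using p by (simp add: divide_le_eq)
    moreover have "norm (h t x) = \<bar>g t x\<bar> / (1 + norm x)"
      unfolding h_def real_norm_def abs_divide using p by simp
    ultimately show ?thesis by simp
  qed
  obtain k where k: "strict_mono k" and kc: "\<And>x. x \<in> T \<Longrightarrow> \<exists>l. (\<lambda>n. h (k n) x) \<longlonglongrightarrow> l"
  proof (rule function_convergent_subsequence[of T h c, OF T(1) hb])
    fix k :: "nat \<Rightarrow> nat"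
    assume a: "strict_mono k" "\<And>x. x \<in> T \<Longrightarrow> \<exists>l. (\<lambda>n. h (k n) x) \<longlonglongrightarrow> l"
    show thesis by (rule that[OF a(1) a(2)])
  qed
  have convT: "convergent (\<lambda>n. g (k n) x)" if xT: "x \<in> T" for x
  proof -
    obtain l where "(\<lambda>n. h (k n) x) \<longlonglongrightarrow> l" using kc[OF xT] by blast
    then have "(\<lambda>n. (1 + norm x) * h (k n) x) \<longlonglongrightarrow> (1 + norm x) * l"
      by (intro tendsto_mult_left)
    moreover have "(1 + norm x) * h (k n) x = g (k n) x" for n
    proof -
      have "1 + norm x \<noteq> 0" using norm_ge_zero[of x] by linarith
      then show ?thesis unfolding h_def by simp
    qed
    ultimately show ?thesis unfolding convergent_def by auto
  qed
  show ?thesis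
  proof (rule that[OF k])
    fix x
    show "convergent (\<lambda>t. g (k t) x)"
      unfolding Cauchy_convergent_iff[symmetric]
    proof (rule CauchyI)
      fix e :: real assume e: "e > 0"
      have "x \<in> closure T" using T(3) by auto
      moreover have "e / (3 * c) > 0" using e c by simp
      ultimately obtain y where y: "y \<in> T" "dist y x < e / (3 * c)"
        unfolding closure_approachable by blast
      have "Cauchy (\<lambda>n. g (k n) y)" using convT[OF y(1)] by (rule convergent_Cauchy)
      moreover have "e/3 > 0" using e by simp
      ultimately obtain M where M: "\<forall>m\<ge>M. \<forall>n\<ge>M. norm (g (k m) y - g (k n) y) < e/3"
        by (rule CauchyD[THEN exE])
      have cl: "\<bar>g t x - g t y\<bar> < e/3" for t
      proof -
        have "\<bar>g t x - g t y\<bar> \<le> c * norm (x - y)" by (rule lip)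
        also have "\<dots> < c * (e / (3 * c))"
          using y(2) c by (intro mult_strict_left_mono) (simp_all add: dist_norm norm_minus_commute)
        also have "\<dots> = e / 3" using c by simp
        finally show ?thesis .
      qed
      show "\<exists>M. \<forall>m\<ge>M. \<forall>n\<ge>M. norm (g (k m) x - g (k n) x) < e"
      proof (intro exI allI impI)
        fix m n assume "m \<ge> M" "n \<ge> M"
        then have "\<bar>g (k m) y - g (k n) y\<bar> < e/3" using M by auto
        then show "norm (g (k m) x - g (k n) x) < e"
          using cl[of "k m"] cl[of "k n"] unfolding real_norm_def by arith
      qed
    qed
  qed
qed

lemma hs_closed: "closed {x::real^'n. \<forall>i\<in>I. a i \<bullet> x \<le> b i}"
proof -
  have "{x::real^'n. \<forall>i\<in>I. a i \<bullet> x \<le> b i} = (\<Inter>i\<in>I. {x. a i \<bullet> x \<le> b i})" by auto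
  then show ?thesis by (simp add: closed_INT closed_halfspace_le)
qed

lemma hs_convex: "convex {x::real^'n. \<forall>i\<in>I. a i \<bullet> x \<le> b i}"
proof -
  have "{x::real^'n. \<forall>i\<in>I. a i \<bullet> x \<le> b i} = (\<Inter>i\<in>I. {x. a i \<bullet> x \<le> b i})" by auto
  then show ?thesis by (simp add: convex_INT convex_halfspace_le)
qed

lemma dist_add_self: "dist (v::'a::real_normed_vector) (v + z) = norm z"
  by (simp add: dist_norm)

lemma ext_count:
  fixes a :: "'i \<Rightarrow> real^'n"
  assumes fin: "finite I" and P: "P = {x. \<forall>i\<in>I. a i \<bullet> x \<le> b i}"
  shows "finite {v. v extreme_point_of P} \<and> card {v. v extreme_point_of P} \<le> 2 ^ card I"
proof -
  define E where "E = {v. v extreme_point_of P}"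
  define act where "act v = {i\<in>I. a i \<bullet> v = b i}" for v
  have inj: "inj_on act E"
  proof (rule inj_onI)
    fix v w assume v: "v \<in> E" and w: "w \<in> E" and eq: "act v = act w"
    show "v = w"
    proof (rule ccontr)
      assume ne: "v \<noteq> w"
      have vP: "v \<in> P" and wP: "w \<in> P" using v w by (auto simp: E_def extreme_point_of_def)
      define d where "d = w - v"
      have dne: "d \<noteq> 0" using ne by (simp add: d_def)
      define U where "U = (\<Inter>i\<in>I - act v. {x. a i \<bullet> x < b i})"
      have "open U" unfolding U_def using fin by (intro open_INT) (auto simp: open_halfspace_lt)
      moreover have "v \<in> U"
        using vP unfolding U_def act_def P by (auto simp: less_le)
      ultimately obtain dl where dl: "dl > 0" "ball v dl \<subseteq> U"
        by (meson open_contains_ball)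
      define ep where "ep = dl / (2 * norm d)"
      have ndp: "norm d > 0" using dne by simp
      have epp: "ep > 0" using dl ndp by (simp add: ep_def)
      have nep: "norm (ep *\<^sub>R d) < dl"
      proof -
        have "norm (ep *\<^sub>R d) = ep * norm d" using epp by simp
        also have "\<dots> = dl / 2" using ndp by (simp add: ep_def)
        finally show ?thesis using dl by simp
      qed
      have inP: "v + s *\<^sub>R (ep *\<^sub>R d) \<in> P" if s: "s = 1 \<or> s = -1" for s
      proof -
        have "norm (s *\<^sub>R (ep *\<^sub>R d)) = norm (ep *\<^sub>R d)" using s by auto
        then have "v + s *\<^sub>R (ep *\<^sub>R d) \<in> ball v dl" using nep
          unfolding mem_ball dist_add_self by linarith
        then have inU: "v + s *\<^sub>R (ep *\<^sub>R d) \<in> U" using dl by blast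
        show ?thesis unfolding P
        proof (intro CollectI ballI)
          fix i assume i: "i \<in> I"
          show "a i \<bullet> (v + s *\<^sub>R (ep *\<^sub>R d)) \<le> b i"
          proof (cases "i \<in> act v")
            case True
            then have "i \<in> act w" using eq by simp
            then have "a i \<bullet> v = b i" "a i \<bullet> w = b i" using True by (auto simp: act_def)
            then have "a i \<bullet> d = 0" by (simp add: d_def inner_diff_right)
            then show ?thesis using \<open>a i \<bullet> v = b i\<close> by (simp add: inner_add_right)
          next
            case False
            then have "i \<in> I - act v" using i by blast
            then show ?thesis using inU unfolding U_def by (meson INT_D less_imp_le mem_Collect_eq)
          qed
        qed
      qed
      have p1: "v + 1 *\<^sub>R (ep *\<^sub>R d) \<in> P" and p2: "v + (-1) *\<^sub>R (ep *\<^sub>R d) \<in> P"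
        using inP[of 1] inP[of "-1"] by simp_all
      have "v \<in> open_segment (v + (-1) *\<^sub>R (ep *\<^sub>R d)) (v + 1 *\<^sub>R (ep *\<^sub>R d))"
        unfolding in_segment
      proof
        show "v + (-1) *\<^sub>R (ep *\<^sub>R d) \<noteq> v + 1 *\<^sub>R (ep *\<^sub>R d)"
        proof
          assume "v + (-1) *\<^sub>R (ep *\<^sub>R d) = v + 1 *\<^sub>R (ep *\<^sub>R d)"
          then have "(-1) *\<^sub>R (ep *\<^sub>R d) = 1 *\<^sub>R (ep *\<^sub>R d)" by (rule add_left_imp_eq)
          then have "(-1) *\<^sub>R (ep *\<^sub>R d) - 1 *\<^sub>R (ep *\<^sub>R d) = 0" by simp
          then have "(-1 - 1) *\<^sub>R (ep *\<^sub>R d) = 0" by (simp only: scaleR_diff_left)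
          then show False using epp dne by simp
        qed
        show "\<exists>u>0. u < 1 \<and> v = (1 - u) *\<^sub>R (v + (-1) *\<^sub>R (ep *\<^sub>R d)) + u *\<^sub>R (v + 1 *\<^sub>R (ep *\<^sub>R d))"
        proof (rule exI[of _ "1/2"])
          have "(1 - 1/2::real) *\<^sub>R (v + (-1) *\<^sub>R (ep *\<^sub>R d)) + (1/2::real) *\<^sub>R (v + 1 *\<^sub>R (ep *\<^sub>R d))
             = ((1/2::real) *\<^sub>R v + (1/2::real) *\<^sub>R v) + ((1/2::real) *\<^sub>R (ep *\<^sub>R d) - (1/2::real) *\<^sub>R (ep *\<^sub>R d))"
            by (simp only: scaleR_add_right scaleR_minus1_left scaleR_one scaleR_minus_right) (simp add: algebra_simps)
          also have "\<dots> = v" by (simp add: scaleR_left_distrib[symmetric])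
          finally show "1/2 > (0::real) \<and> 1/2 < (1::real) \<and> v = (1 - 1/2) *\<^sub>R (v + (-1) *\<^sub>R (ep *\<^sub>R d)) + (1/2) *\<^sub>R (v + 1 *\<^sub>R (ep *\<^sub>R d))"
            by simp
        qed
      qed
      moreover have "\<forall>p\<in>P. \<forall>q\<in>P. v \<notin> open_segment p q"
        using v unfolding E_def extreme_point_of_def by simp
      ultimately show False using p1 p2 by blast
    qed
  qed
  have sub: "act ` E \<subseteq> Pow I" by (auto simp: act_def)
  have finPow: "finite (Pow I)" using fin by simp
  then have "finite (act ` E)" using sub finite_subset by blast
  then have finE: "finite E" using inj finite_imageD by blast
  have "card E = card (act ` E)" using inj card_image by fastforce
  also have "\<dots> \<le> card (Pow I)" using card_mono[OF finPow sub] .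
  also have "\<dots> = 2 ^ card I" using fin by (simp add: card_Pow)
  finally show ?thesis using finE unfolding E_def by simp
qed

lemma poly_halfspaces:
  fixes L :: "(real^'n) set"
  assumes poly: "polyhedron L" and fint: "f \<in> interior L"
  obtains a :: "(real^'n) set \<Rightarrow> real^'n" and b where
    "L = {x. \<forall>C\<in>{F. F facet_of L}. a C \<bullet> x \<le> b C}"
proof -
  define I where "I = {F. F facet_of L}"
  have "\<forall>C\<in>I. \<exists>ab. fst ab \<noteq> 0 \<and> L \<subseteq> {x. fst ab \<bullet> x \<le> snd ab} \<and> C = L \<inter> {x. fst ab \<bullet> x = snd ab}"
  proof
    fix C assume "C \<in> I"
    then have "C facet_of L" by (simp add: I_def)
    then obtain a b where "a \<noteq> 0" "L \<subseteq> {x. a \<bullet> x \<le> b}" "C = L \<inter> {x. a \<bullet> x = b}"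
      by (rule facet_of_polyhedron[OF poly])
    then show "\<exists>ab. fst ab \<noteq> 0 \<and> L \<subseteq> {x. fst ab \<bullet> x \<le> snd ab} \<and> C = L \<inter> {x. fst ab \<bullet> x = snd ab}"
      by (intro exI[of _ "(a,b)"]) simp
  qed
  then obtain ab where ab0: "\<forall>C\<in>I. fst (ab C) \<noteq> 0 \<and> L \<subseteq> {x. fst (ab C) \<bullet> x \<le> snd (ab C)}
       \<and> C = L \<inter> {x. fst (ab C) \<bullet> x = snd (ab C)}"
    by (rule bchoice[THEN exE])
  then have ab: "\<And>C. C \<in> I \<Longrightarrow> fst (ab C) \<noteq> 0 \<and> L \<subseteq> {x. fst (ab C) \<bullet> x \<le> snd (ab C)}
       \<and> C = L \<inter> {x. fst (ab C) \<bullet> x = snd (ab C)}" by blast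
  define a where "a C = fst (ab C)" for C
  define b where "b C = snd (ab C)" for C
  have clL: "closed L" using poly by (rule polyhedron_imp_closed)
  have "L = {x. \<forall>C\<in>I. a C \<bullet> x \<le> b C}"
  proof
    show "L \<subseteq> {x. \<forall>C\<in>I. a C \<bullet> x \<le> b C}" using ab by (auto simp: a_def b_def)
  next
    show "{x. \<forall>C\<in>I. a C \<bullet> x \<le> b C} \<subseteq> L"
    proof
      fix x assume x: "x \<in> {x. \<forall>C\<in>I. a C \<bullet> x \<le> b C}"
      show "x \<in> L"
      proof (rule ccontr)
        assume xL: "x \<notin> L"
        have fL: "f \<in> L" using fint interior_subset by blast
        have "closed_segment f x \<inter> L \<noteq> {}" using fL by auto
        moreover have "closed_segment f x - L \<noteq> {}" using xL by auto
        ultimately have "closed_segment f x \<inter> frontier L \<noteq> {}"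
          by (intro connected_Int_frontier) auto
        then obtain y where ys: "y \<in> closed_segment f x" and yf: "y \<in> frontier L" by blast
        have "interior L \<noteq> {}" using fint by blast
        then have "frontier L = rel_frontier L" by (simp add: rel_frontier_nonempty_interior)
        also have "\<dots> = \<Union>{F. F facet_of L}" by (rule rel_frontier_of_polyhedron[OF poly])
        finally obtain C where CI: "C \<in> I" and yC: "y \<in> C" using yf I_def by blast
        have a0: "a C \<noteq> 0" and Lsub: "L \<subseteq> {x. a C \<bullet> x \<le> b C}" and Ceq: "C = L \<inter> {x. a C \<bullet> x = b C}"
          using ab[OF CI] by (auto simp: a_def b_def)
        have ay: "a C \<bullet> y = b C" using yC Ceq by blast
        have yL: "y \<in> L" using yC Ceq by blast
        have "f \<in> interior {x. a C \<bullet> x \<le> b C}" using fint interior_mono[OF Lsub] by blast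
        then have af: "a C \<bullet> f < b C" using a0 by simp
        have ax: "a C \<bullet> x \<le> b C" using x CI by blast
        obtain u where u: "0 \<le> u" "u \<le> 1" "y = (1 - u) *\<^sub>R f + u *\<^sub>R x"
          using ys unfolding in_segment by blast
        show False
        proof (cases "u = 1")
          case True
          then have "y = x" using u by simp
          then show False using yL xL by simp
        next
          case False
          then have u1: "u < 1" using u by simp
          have "a C \<bullet> y = (1 - u) * (a C \<bullet> f) + u * (a C \<bullet> x)"
            using u(3) by (simp add: inner_add_right)
          also have "\<dots> < (1 - u) * b C + u * b C"
            using af ax u u1 by (intro add_less_le_mono mult_strict_left_mono mult_left_mono) auto
          also have "\<dots> = b C" by (simp add: algebra_simps)
          finally show False using ay by simp
        qed
      qed
    qed
  qed
  then show ?thesis using that I_def by blast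
qed

lemma mem_transl: "z \<in> transl B f \<longleftrightarrow> z + f \<in> B"
proof
  assume "z \<in> transl B f"
  then obtain x where "x \<in> B" "z = x - f" by (auto simp: transl_def)
  then show "z + f \<in> B" by simp
next
  assume "z + f \<in> B"
  moreover have "z = (z + f) - f" by simp
  ultimately show "z \<in> transl B f" unfolding transl_def by blast
qed

lemma transl_ball:
  fixes B :: "(real^'n) set"
  assumes "f \<in> interior B"
  obtains d where "d > 0" "ball 0 d \<subseteq> transl B f"
proof -
  obtain e where e: "e > 0" "ball f e \<subseteq> B" using assms mem_interior by blast
  have "ball 0 e \<subseteq> transl B f"
  proof
    fix z :: "real^'n" assume "z \<in> ball 0 e"
    then have "norm z < e" by simp
    then have "z + f \<in> ball f e" by (simp add: dist_norm)
    then show "z \<in> transl B f" using e(2) mem_transl by blast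
  qed
  then show ?thesis using that e(1) by blast
qed

lemma transl_convex:
  fixes B :: "(real^'n) set"
  assumes "convex B" shows "convex (transl B f)"
  unfolding transl_def using assms by (rule convex_translation_subtract)

lemma psi_self_le1:
  fixes L :: "(real^'n) set"
  assumes "x \<in> L" shows "psi (transl L f) (x - f) \<le> 1"
proof (rule psi_le)
  show "1 \<in> pset (transl L f) (x - f)"
  proof -
    have "x - f \<in> transl L f" using assms mem_transl[of "x - f" L f] by simp
    then show ?thesis unfolding pset_def using mem_scale_iff[of 1 "x - f" "transl L f"] by simp
  qed
qed

lemma affine_preimage_convex:
  fixes B :: "(real^'n) set"
  assumes "convex B" "K \<noteq> 0"
  shows "convex {x. (1/K) *\<^sub>R (x - f) + f \<in> B}"
proof (rule convexI)
  fix x y :: "real^'n" and u v :: real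
  assume x: "x \<in> {x. (1/K) *\<^sub>R (x - f) + f \<in> B}" and y: "y \<in> {x. (1/K) *\<^sub>R (x - f) + f \<in> B}"
    and uv: "0 \<le> u" "0 \<le> v" "u + v = 1"
  have "u *\<^sub>R ((1/K) *\<^sub>R (x - f) + f) + v *\<^sub>R ((1/K) *\<^sub>R (y - f) + f) \<in> B"
    using convexD[OF assms(1)] x y uv by simp
  moreover have "u *\<^sub>R ((1/K) *\<^sub>R (x - f) + f) + v *\<^sub>R ((1/K) *\<^sub>R (y - f) + f)
      = (1/K) *\<^sub>R ((u *\<^sub>R x + v *\<^sub>R y) - f) + f"
  proof -
    have "u *\<^sub>R ((1/K) *\<^sub>R (x - f) + f) + v *\<^sub>R ((1/K) *\<^sub>R (y - f) + f)
        = (1/K) *\<^sub>R ((u *\<^sub>R x + v *\<^sub>R y) - (u + v) *\<^sub>R f) + (u + v) *\<^sub>R f"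
      by (simp add: algebra_simps)
    then show ?thesis using uv(3) by simp
  qed
  ultimately show "u *\<^sub>R x + v *\<^sub>R y \<in> {x. (1/K) *\<^sub>R (x - f) + f \<in> B}" by simp
qed

lemma step:
  fixes P L :: "(real^'n) set" and \<B> :: "(real^'n) set set" and a :: "'i \<Rightarrow> real^'n"
  assumes finJ: "finite J" and cardJ: "card J \<le> M"
    and P: "P = {x. \<forall>j\<in>J. a j \<bullet> x \<le> b j}" and bP: "bounded P" and fP: "f \<in> P" and PL: "P \<subseteq> L"
    and alpha: "\<alpha> > 0"
    and Bconv: "\<And>B. B \<in> \<B> \<Longrightarrow> convex B"
    and V: "\<And>k r s. k \<ge> 1 \<Longrightarrow> s \<in> orth k \<Longrightarrow> (\<Sum>j<k. s j * psi (transl L f) (r j)) < 1 / \<alpha>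
              \<Longrightarrow> \<exists>B\<in>\<B>. f \<in> interior B \<and> (\<Sum>j<k. s j * psi (transl B f) (r j)) < 1"
  shows "\<exists>B\<in>\<B>. f \<in> interior B \<and> (\<forall>x\<in>P. (1 / (2 * \<alpha> * 2 ^ M + 2)) *\<^sub>R (x - f) + f \<in> B)"
proof -
  define K where "K = 2 * \<alpha> * 2 ^ M + 2"
  have Kp: "K > 0" using alpha by (simp add: K_def add_pos_nonneg)
  define E where "E = {v. v extreme_point_of P}"
  have finE: "finite E" and cardE: "card E \<le> 2 ^ card J"
    using ext_count[OF finJ P] by (simp_all add: E_def)
  have cP: "compact P" using bP hs_closed[of J a b] P by (simp add: compact_eq_bounded_closed)
  have cvP: "convex P" using hs_convex[of J a b] P by simp
  have PE: "P = convex hull E" unfolding E_def by (rule Krein_Milman_Minkowski[OF cP cvP])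
  have Ene: "E \<noteq> {}" using fP PE by auto
  obtain es where es: "set es = E" "distinct es" using finite_distinct_list[OF finE] by blast
  define k where "k = length es"
  have kE: "k = card E" using distinct_card[OF es(2)] es(1) by (simp add: k_def)
  have k1: "k \<ge> 1" using kE finE Ene by (simp add: Suc_le_eq card_gt_0_iff)
  have kM: "real k \<le> 2 ^ M"
  proof -
    have "(2::nat) ^ card J \<le> 2 ^ M" using cardJ by (rule power_increasing) simp
    then have "k \<le> 2 ^ M" using cardE kE by linarith
    then have "real k \<le> real (2 ^ M)" by (rule of_nat_mono)
    then show ?thesis by simp
  qed
  define r where "r j = es ! j - f" for j
  define c where "c = 1 / (2 * \<alpha> * real k)"
  have cp: "c > 0" using alpha k1 by (simp add: c_def)
  define s where "s j = (if j < k then c else 0)" for j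
  have sorth: "s \<in> orth k" using cp by (simp add: orth_def s_def)
  have esP: "es ! j \<in> P" if "j < k" for j
  proof -
    have "es ! j \<in> set es" using that k_def by simp
    then have "es ! j \<in> E" using es(1) by simp
    then show ?thesis using PE hull_inc[of "es ! j" E convex] by simp
  qed
  have "(\<Sum>j<k. s j * psi (transl L f) (r j)) \<le> (\<Sum>j<k. c * 1)"
  proof (rule sum_mono)
    fix j assume "j \<in> {..<k}"
    then have j: "j < k" by simp
    have "psi (transl L f) (r j) \<le> 1" unfolding r_def using esP[OF j] PL psi_self_le1 by blast
    then show "s j * psi (transl L f) (r j) \<le> c * 1" using j cp by (simp add: s_def mult_left_mono)
  qed
  also have "\<dots> = 1 / (2 * \<alpha>)" using k1 by (simp add: c_def)
  also have "\<dots> < 1 / \<alpha>" using alpha by (simp add: frac_less2)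
  finally obtain B where B: "B \<in> \<B>" "f \<in> interior B" and Bs: "(\<Sum>j<k. s j * psi (transl B f) (r j)) < 1"
    using V[OF k1 sorth] by blast
  obtain d where d: "d > 0" "ball 0 d \<subseteq> transl B f" using transl_ball[OF B(2)] by blast
  have cvB: "convex (transl B f)" using Bconv[OF B(1)] by (rule transl_convex)
  have z0: "0 \<in> transl B f" using d by auto
  have inB: "(1/K) *\<^sub>R (x - f) + f \<in> B" if "x \<in> E" for x
  proof -
    have "x \<in> set es" using that es(1) by simp
    then obtain j where j: "j < k" "es ! j = x" unfolding in_set_conv_nth k_def by blast
    have nn: "\<And>i. i \<in> {..<k} \<Longrightarrow> 0 \<le> s i * psi (transl B f) (r i)"
      using psi_nonneg[OF d(2,1)] cp by (simp add: s_def)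
    have "s j * psi (transl B f) (r j) \<le> (\<Sum>j<k. s j * psi (transl B f) (r j))"
      using j(1) by (intro member_le_sum nn) auto
    then have "c * psi (transl B f) (r j) < 1" using Bs j(1) by (simp add: s_def)
    then have "psi (transl B f) (r j) < 1 / c" using cp by (simp add: field_simps)
    also have "1 / c = 2 * \<alpha> * real k" by (simp add: c_def)
    also have "\<dots> \<le> 2 * \<alpha> * 2 ^ M" using kM alpha by simp
    also have "\<dots> < K" by (simp add: K_def)
    finally have "K \<in> pset (transl B f) (r j)"
      using psi_lt_mem[OF cvB z0] pset_nonempty[OF d(2,1)] by blast
    then have "(1/K) *\<^sub>R (r j) \<in> transl B f" using Kp by (simp add: pset_def mem_scale_iff)
    then have "(1/K) *\<^sub>R (x - f) \<in> transl B f" using j(2) by (simp add: r_def)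
    then show ?thesis using mem_transl[of "(1/K) *\<^sub>R (x - f)" B f] by simp
  qed
  have "E \<subseteq> {x. (1/K) *\<^sub>R (x - f) + f \<in> B}" using inB by blast
  then have "convex hull E \<subseteq> {x. (1/K) *\<^sub>R (x - f) + f \<in> B}"
    using affine_preimage_convex[OF Bconv[OF B(1)], of K f] Kp by (simp add: hull_minimal)
  then show ?thesis using B PE unfolding K_def by blast
qed

lemma core:
  fixes \<B> :: "(real^'n) set set" and L :: "(real^'n) set"
  assumes B_sub: "\<B> \<subseteq> Cn" and fcl: "f_closed f \<B>"
    and poly: "polyhedron L" and fac: "card {F. F facet_of L} \<le> m" and fint: "f \<in> interior L"
    and alpha: "\<alpha> > 0"
    and V: "\<And>k r s. k \<ge> 1 \<Longrightarrow> s \<in> orth k \<Longrightarrow> (\<Sum>j<k. s j * psi (transl L f) (r j)) < 1 / \<alpha>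
              \<Longrightarrow> \<exists>B\<in>\<B>. f \<in> interior B \<and> (\<Sum>j<k. s j * psi (transl B f) (r j)) < 1"
  shows "\<exists>B\<in>\<B>. shrink (1 / (2 * \<alpha> * 2 ^ (m + 2 * CARD('n)) + 2)) L f \<subseteq> B"
proof -
  define M where "M = m + 2 * CARD('n)"
  define K where "K = 2 * \<alpha> * 2 ^ M + 2"
  have Kp: "K > 0" using alpha by (simp add: K_def add_pos_nonneg)
  define I where "I = {F. F facet_of L}"
  have finI: "finite I" unfolding I_def using poly by (rule finite_polyhedron_facets)
  obtain a :: "(real^'n) set \<Rightarrow> real^'n" and b where Lrep: "L = {x. \<forall>C\<in>I. a C \<bullet> x \<le> b C}"
    using poly_halfspaces[OF poly fint] unfolding I_def by blast
  define J :: "((real^'n) set + ('n \<times> bool)) set" where "J = Inl ` I \<union> Inr ` UNIV"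
  have finJ: "finite J" using finI by (simp add: J_def)
  have cardJ: "card J \<le> M"
  proof -
    have "card J \<le> card (Inl ` I :: ((real^'n) set + ('n \<times> bool)) set) + card (Inr ` (UNIV :: ('n \<times> bool) set) :: ((real^'n) set + ('n \<times> bool)) set)"
      unfolding J_def by (rule card_Un_le)
    also have "card (Inl ` I :: ((real^'n) set + ('n \<times> bool)) set) = card I" by (rule card_image) simp
    also have "card (Inr ` (UNIV :: ('n \<times> bool) set) :: ((real^'n) set + ('n \<times> bool)) set) = card (UNIV :: ('n \<times> bool) set)"
      by (rule card_image) simp
    also have "card (UNIV :: ('n \<times> bool) set) = 2 * CARD('n)"
      by (simp add: UNIV_Times_UNIV[symmetric] card_cartesian_product del: UNIV_Times_UNIV)
    finally show ?thesis using fac unfolding M_def I_def by linarith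
  qed
  define a' where "a' j = (case j of Inl C \<Rightarrow> a C | Inr p \<Rightarrow> (if snd p then axis (fst p) 1 else - axis (fst p) 1))" for j
  define b' where "b' t j = (case j of Inl C \<Rightarrow> b C | Inr p \<Rightarrow> (if snd p then f $ (fst p) + (real t + 1) else (real t + 1) - f $ (fst p)))" for t j
  define P where "P t = {x. \<forall>j\<in>J. a' j \<bullet> x \<le> b' t j}" for t
  have Jsplit: "(\<forall>j\<in>J. Q j) \<longleftrightarrow> (\<forall>C\<in>I. Q (Inl C)) \<and> (\<forall>i. Q (Inr (i,True)) \<and> Q (Inr (i,False)))" for Q
  proof
    assume "\<forall>j\<in>J. Q j"
    then show "(\<forall>C\<in>I. Q (Inl C)) \<and> (\<forall>i. Q (Inr (i,True)) \<and> Q (Inr (i,False)))"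
      unfolding J_def by blast
  next
    assume H: "(\<forall>C\<in>I. Q (Inl C)) \<and> (\<forall>i. Q (Inr (i,True)) \<and> Q (Inr (i,False)))"
    show "\<forall>j\<in>J. Q j"
    proof
      fix j assume "j \<in> J"
      then consider C where "C \<in> I" "j = Inl C" | p where "j = Inr p" unfolding J_def by blast
      then show "Q j"
      proof cases
        case 1 then show ?thesis using H by blast
      next
        case 2
        obtain i bb where "p = (i, bb)" by (cases p)
        then show ?thesis using H 2 by (cases bb) auto
      qed
    qed
  qed
  have Pchar: "x \<in> P t \<longleftrightarrow> x \<in> L \<and> (\<forall>i. \<bar>x $ i - f $ i\<bar> \<le> real t + 1)" for x t
  proof -
    have "x \<in> P t \<longleftrightarrow> (\<forall>C\<in>I. a C \<bullet> x \<le> b C) \<and> (\<forall>i. x $ i \<le> f $ i + (real t + 1) \<and> - (x $ i) \<le> (real t + 1) - f $ i)"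
      unfolding P_def mem_Collect_eq Jsplit by (simp add: a'_def b'_def inner_axis')
    also have "\<dots> \<longleftrightarrow> x \<in> L \<and> (\<forall>i. \<bar>x $ i - f $ i\<bar> \<le> real t + 1)"
    proof -
      have e: "(x $ i \<le> f $ i + (real t + 1) \<and> - (x $ i) \<le> (real t + 1) - f $ i) \<longleftrightarrow> \<bar>x $ i - f $ i\<bar> \<le> real t + 1" for i
        by arith
      show ?thesis unfolding e using Lrep by simp
    qed
    finally show ?thesis .
  qed
  have bP: "bounded (P t)" for t
  proof -
    have "P t \<subseteq> cbox (\<chi> i. f $ i - (real t + 1)) (\<chi> i. f $ i + (real t + 1))"
    proof
      fix x assume "x \<in> P t"
      then have H: "\<forall>i. \<bar>x $ i - f $ i\<bar> \<le> real t + 1" by (simp add: Pchar)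
      show "x \<in> cbox (\<chi> i. f $ i - (real t + 1)) (\<chi> i. f $ i + (real t + 1))"
        unfolding mem_box_cart
      proof
        fix i
        have "\<bar>x $ i - f $ i\<bar> \<le> real t + 1" using H by blast
        then show "(\<chi> i. f $ i - (real t + 1)) $ i \<le> x $ i \<and> x $ i \<le> (\<chi> i. f $ i + (real t + 1)) $ i"
          by simp arith
      qed
    qed
    then show ?thesis using bounded_subset bounded_cbox by blast
  qed
  have fL: "f \<in> L" using fint interior_subset by blast
  have fP: "f \<in> P t" for t using fL by (simp add: Pchar)
  have PL: "P t \<subseteq> L" for t by (auto simp: Pchar)
  have Bconv: "\<And>B. B \<in> \<B> \<Longrightarrow> convex B" using B_sub by (auto simp: Cn_def)
  have "\<forall>t. \<exists>B. B \<in> \<B> \<and> f \<in> interior B \<and> (\<forall>x\<in>P t. (1 / K) *\<^sub>R (x - f) + f \<in> B)"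
  proof
    fix t
    show "\<exists>B. B \<in> \<B> \<and> f \<in> interior B \<and> (\<forall>x\<in>P t. (1 / K) *\<^sub>R (x - f) + f \<in> B)"
      using step[OF finJ cardJ P_def bP fP PL alpha Bconv V] unfolding K_def by blast
  qed
  then obtain Bs where Bs: "\<forall>t. Bs t \<in> \<B> \<and> f \<in> interior (Bs t) \<and> (\<forall>x\<in>P t. (1 / K) *\<^sub>R (x - f) + f \<in> Bs t)"
    by (rule choice[THEN exE])
  obtain e0 where e0: "e0 > 0" "ball f e0 \<subseteq> L" using fint mem_interior by blast
  define ep where "ep = min e0 1"
  have epp: "ep > 0" using e0 by (simp add: ep_def)
  have ballP: "ball f ep \<subseteq> P t" for t
  proof
    fix x assume x: "x \<in> ball f ep"
    then have xL: "x \<in> L" using e0 by (auto simp: ep_def)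
    have "\<bar>x $ i - f $ i\<bar> \<le> real t + 1" for i
    proof -
      have "\<bar>x $ i - f $ i\<bar> = \<bar>(x - f) $ i\<bar>" by simp
      also have "\<dots> \<le> norm (x - f)" by (rule component_le_norm_cart)
      also have "\<dots> < ep" using x by (simp add: dist_norm norm_minus_commute)
      also have "\<dots> \<le> 1" by (simp add: ep_def)
      finally show ?thesis by simp
    qed
    then show "x \<in> P t" using xL by (simp add: Pchar)
  qed
  define dl where "dl = ep / K"
  have dlp: "dl > 0" using epp Kp by (simp add: dl_def)
  define D where "D t = transl (Bs t) f" for t
  have cvD: "convex (D t)" for t unfolding D_def using Bconv Bs by (simp add: transl_convex)
  have ballD: "ball 0 dl \<subseteq> D t" for t
  proof
    fix z :: "real^'n" assume "z \<in> ball 0 dl"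
    then have nz: "norm z < dl" by simp
    define x where "x = f + K *\<^sub>R z"
    have "norm (x - f) = K * norm z" using Kp by (simp add: x_def)
    also have "\<dots> < K * dl" using nz Kp by simp
    also have "\<dots> = ep" using Kp by (simp add: dl_def)
    finally have "x \<in> ball f ep" by (simp add: dist_norm norm_minus_commute)
    then have "x \<in> P t" using ballP by blast
    then have "(1 / K) *\<^sub>R (x - f) + f \<in> Bs t" using Bs by blast
    moreover have "(1 / K) *\<^sub>R (x - f) = z" using Kp by (simp add: x_def)
    ultimately have "z + f \<in> Bs t" by simp
    then show "z \<in> D t" unfolding D_def using mem_transl by blast
  qed
  define g where "g t x = psi (D t) x" for t x
  have gnn: "g t x \<ge> 0" for t x unfolding g_def using psi_nonneg[OF ballD dlp] .
  have gbd: "g t x \<le> norm x / dl" for t x unfolding g_def using psi_bound[OF ballD dlp cvD] .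
  have gbd': "\<bar>g t x\<bar> \<le> (1/dl) * norm x" for t x using gnn[of t x] gbd[of t x] by simp
  have glip: "\<bar>g t x - g t y\<bar> \<le> (1/dl) * norm (x - y)" for t x y
    unfolding g_def using psi_lip[OF ballD dlp cvD] by simp
  have cdl: "1/dl > 0" using dlp by simp
  obtain kk where kk: "strict_mono kk" and kc: "\<And>x. convergent (\<lambda>t. g (kk t) x)"
  proof (rule equi_lip_subseq[of g "1/dl", OF gbd' glip cdl])
    fix k :: "nat \<Rightarrow> nat"
    assume "strict_mono k" "\<And>x. convergent (\<lambda>t. g (k t) x)"
    then show thesis by (rule that)
  qed
  define G where "G x = lim (\<lambda>t. g (kk t) x)" for x
  have GL: "(\<lambda>t. g (kk t) x) \<longlonglongrightarrow> G x" for x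
    using kc[of x] unfolding G_def convergent_LIMSEQ_iff .
  have Gnn: "G x \<ge> 0" for x
    by (rule LIMSEQ_le_const[OF GL]) (use gnn in blast)
  have Gbd: "G x \<le> norm x / dl" for x
    by (rule LIMSEQ_le_const2[OF GL]) (use gbd in blast)
  have Glip: "dist (G x) (G y) \<le> (1/dl) * dist x y" for x y
  proof -
    have "(\<lambda>t. \<bar>g (kk t) x - g (kk t) y\<bar>) \<longlonglongrightarrow> \<bar>G x - G y\<bar>"
      by (intro tendsto_rabs tendsto_diff GL)
    then have "\<bar>G x - G y\<bar> \<le> (1/dl) * norm (x - y)"
      by (rule LIMSEQ_le_const2) (use glip in blast)
    then show ?thesis by (simp add: dist_norm dist_real_def)
  qed
  have Ghom: "G (c *\<^sub>R x) = c * G x" if c: "c > 0" for c x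
  proof -
    have "(\<lambda>t. g (kk t) (c *\<^sub>R x)) = (\<lambda>t. c * g (kk t) x)"
      unfolding g_def using psi_homog[OF ballD dlp cvD c] by simp
    moreover have "(\<lambda>t. c * g (kk t) x) \<longlonglongrightarrow> c * G x" by (intro tendsto_mult_left GL)
    ultimately have "(\<lambda>t. g (kk t) (c *\<^sub>R x)) \<longlonglongrightarrow> c * G x" by simp
    then show ?thesis by (rule LIMSEQ_unique[OF GL])
  qed
  have Gconv: "G (u *\<^sub>R x + v *\<^sub>R y) \<le> u * G x + v * G y" if "u \<ge> 0" "v \<ge> 0" for u v x y
  proof (rule LIMSEQ_le[OF GL])
    show "(\<lambda>t. u * g (kk t) x + v * g (kk t) y) \<longlonglongrightarrow> u * G x + v * G y"
      by (intro tendsto_add tendsto_mult_left GL)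
    show "\<exists>N. \<forall>t\<ge>N. g (kk t) (u *\<^sub>R x + v *\<^sub>R y) \<le> u * g (kk t) x + v * g (kk t) y"
      unfolding g_def using psi_conv[OF ballD dlp cvD that] by blast
  qed
  define S where "S = {z. G z \<le> 1}"
  define C where "C = (+) f ` S"
  have Gcont: "continuous_on UNIV G"
    by (rule lipschitz_on_continuous_on[of "1/dl"]) (rule lipschitz_onI, use Glip dlp in auto)
  have clS: "closed S" unfolding S_def by (rule closed_Collect_le[OF Gcont continuous_on_const])
  have cvS: "convex S"
  proof (rule convexI)
    fix x y :: "real^'n" and u v :: real
    assume "x \<in> S" "y \<in> S" "0 \<le> u" "0 \<le> v" "u + v = 1"
    then have "G (u *\<^sub>R x + v *\<^sub>R y) \<le> u * G x + v * G y" "u * G x \<le> u" "v * G y \<le> v"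
      using Gconv[of u v x y] by (auto simp: S_def mult_left_le)
    then show "u *\<^sub>R x + v *\<^sub>R y \<in> S" using \<open>u + v = 1\<close> by (simp add: S_def)
  qed
  have tC: "transl C f = S" unfolding C_def transl_def by (simp add: image_image)
  have ballC: "ball f dl \<subseteq> C"
  proof
    fix z assume "z \<in> ball f dl"
    then have "norm (z - f) < dl" by (simp add: dist_norm norm_minus_commute)
    then have "norm (z - f) / dl < 1" using dlp by simp
    then have "G (z - f) < 1" using Gbd[of "z - f"] by linarith
    then have "z - f \<in> S" by (simp add: S_def)
    moreover have "z = f + (z - f)" by simp
    ultimately show "z \<in> C" unfolding C_def by blast
  qed
  have fintC: "f \<in> interior C" using ballC dlp mem_interior by blast
  have CCn: "C \<in> Cn"
  proof -
    have "closed C" unfolding C_def using clS by (rule closed_translation)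
    moreover have "convex C" unfolding C_def using cvS by (rule convex_translation)
    moreover have "aff_dim C = int CARD('n)"
    proof -
      have "interior C \<noteq> {}" using fintC by blast
      then have "aff_dim C = int DIM(real^'n)" by (rule aff_dim_nonempty_interior)
      then show ?thesis by simp
    qed
    ultimately show ?thesis by (simp add: Cn_def)
  qed
  have psiC: "psi (transl C f) x = G x" for x
    unfolding tC S_def by (rule psi_sublevel[OF Gnn Ghom])
  have "C \<in> fam_at \<B> f"
  proof -
    have "\<forall>t. Bs (kk t) \<in> fam_at \<B> f" using Bs by (simp add: fam_at_def)
    moreover have "C \<in> fam_at Cn f" using CCn fintC by (simp add: fam_at_def)
    moreover have "\<forall>x. (\<lambda>t. psi (transl (Bs (kk t)) f) x) \<longlonglongrightarrow> psi (transl C f) x"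
      using GL unfolding psiC g_def D_def by blast
    ultimately show ?thesis using fcl[unfolded f_closed_def, rule_format, of "\<lambda>t. Bs (kk t)" C] by blast
  qed
  then have CB: "C \<in> \<B>" by (simp add: fam_at_def)
  have "shrink (1 / K) L f \<subseteq> C"
  proof
    fix y assume "y \<in> shrink (1 / K) L f"
    then obtain x where x: "x \<in> L" "y = (1/K) *\<^sub>R x + (1 - 1/K) *\<^sub>R f" by (auto simp: shrink_def)
    define z where "z = (1/K) *\<^sub>R (x - f)"
    have yz: "y = f + z" using x(2) by (simp add: z_def algebra_simps)
    obtain N :: nat where N: "norm (x - f) \<le> real N" using real_arch_simple by blast
    have "g (kk t) z \<le> 1" if t: "t \<ge> N" for t
    proof -
      have "kk t \<ge> t" using kk by (rule seq_suble)
      then have "real N \<le> real (kk t)" using t by simp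
      have "\<bar>x $ i - f $ i\<bar> \<le> real (kk t) + 1" for i
      proof -
        have "\<bar>x $ i - f $ i\<bar> = \<bar>(x - f) $ i\<bar>" by simp
        also have "\<dots> \<le> norm (x - f)" by (rule component_le_norm_cart)
        finally show ?thesis using N \<open>real N \<le> real (kk t)\<close> by linarith
      qed
      then have "x \<in> P (kk t)" using x(1) by (simp add: Pchar)
      then have "z + f \<in> Bs (kk t)" using Bs by (simp add: z_def)
      then have "z \<in> D (kk t)" unfolding D_def using mem_transl by blast
      then have "1 \<in> pset (D (kk t)) z" unfolding pset_def using mem_scale_iff[of 1 z] by simp
      then show ?thesis unfolding g_def by (rule psi_le)
    qed
    then have "G z \<le> 1" by (intro LIMSEQ_le_const2[OF GL]) blast
    then show "y \<in> C" unfolding C_def S_def yz by blast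
  qed
  then show ?thesis using CB unfolding K_def M_def by blast
qed

lemma sscale_iff:
  assumes "a > 0"
  shows "s \<in> sscale (1/a) X \<longleftrightarrow> (\<lambda>j. a * s j) \<in> X"
proof
  assume "s \<in> sscale (1/a) X"
  then obtain t where t: "t \<in> X" "s = (\<lambda>j. (1/a) * t j)" by (auto simp: sscale_def)
  then have "(\<lambda>j. a * s j) = t" using assms by auto
  then show "(\<lambda>j. a * s j) \<in> X" using t by simp
next
  assume h: "(\<lambda>j. a * s j) \<in> X"
  have e: "s = (\<lambda>s j. 1/a * s j) (\<lambda>j. a * s j)" using assms by auto
  from image_eqI[where f="\<lambda>s j. 1/a * s j" and x="\<lambda>j. a * s j", OF e h] show "s \<in> sscale (1/a) X" unfolding sscale_def .
qed

definition valid :: "real^'n \<Rightarrow> (real^'n) set set \<Rightarrow> (real^'n) set set \<Rightarrow> real \<Rightarrow> bool" where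
  "valid f \<B> \<L> a \<longleftrightarrow> a > 0 \<and> (\<forall>k::nat. k \<ge> 1 \<longrightarrow> (\<forall>r::nat \<Rightarrow> real^'n.
          CFam \<B> k r f \<subseteq> sscale (1 / a) (CFam \<L> k r f)))"

lemma rho_f_alt: "rho_f f \<B> \<L> = Inf (ereal ` {a. valid f \<B> \<L> a})"
  unfolding rho_f_def valid_def by simp

lemma rho_f_finite_iff: "rho_f f \<B> \<L> < \<infinity> \<longleftrightarrow> (\<exists>a. valid f \<B> \<L> a)"
proof
  assume h: "rho_f f \<B> \<L> < \<infinity>"
  show "\<exists>a. valid f \<B> \<L> a"
  proof (rule ccontr)
    assume "\<not> (\<exists>a. valid f \<B> \<L> a)"
    then have "{a. valid f \<B> \<L> a} = {}" by blast
    then have "rho_f f \<B> \<L> = Inf (ereal ` {})" unfolding rho_f_alt by (simp only:)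
    also have "\<dots> = \<infinity>" by (simp add: top_ereal_def)
    finally have "rho_f f \<B> \<L> = \<infinity>" .
    then show False using h by simp
  qed
next
  assume "\<exists>a. valid f \<B> \<L> a"
  then obtain a where "valid f \<B> \<L> a" by blast
  then have "rho_f f \<B> \<L> \<le> ereal a" unfolding rho_f_alt by (intro Inf_lower) auto
  then show "rho_f f \<B> \<L> < \<infinity>" by (rule le_less_trans) simp
qed

lemma rho_f_le: "valid f \<B> \<L> a \<Longrightarrow> rho_f f \<B> \<L> \<le> ereal a"
  unfolding rho_f_alt by (intro Inf_lower) auto

lemma CB_mem: "s \<in> CB B k r f \<longleftrightarrow> s \<in> orth k \<and>
   (f \<in> interior B \<longrightarrow> (\<Sum>j<k. s j * psi (transl B f) (r j)) \<ge> 1)"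
  unfolding CB_def by auto

lemma CFam_mem: "s \<in> CFam \<B> k r f \<longleftrightarrow> s \<in> orth k \<and>
   (\<forall>B\<in>\<B>. f \<in> interior B \<longrightarrow> (\<Sum>j<k. s j * psi (transl B f) (r j)) \<ge> 1)"
proof -
  have "s \<in> CFam \<B> k r f \<longleftrightarrow> s \<in> orth k \<and> (\<forall>B\<in>\<B>. s \<in> CB B k r f)"
    unfolding CFam_def by blast
  then show ?thesis unfolding CB_mem by blast
qed

lemma CFam_up:
  assumes "s \<in> CFam \<L> k r f" "c \<ge> 1"
  shows "(\<lambda>j. c * s j) \<in> CFam \<L> k r f"
proof -
  have so: "s \<in> orth k" using assms(1) by (simp add: CFam_def)
  have co: "(\<lambda>j. c * s j) \<in> orth k" using so assms(2) by (simp add: orth_def)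
  have "(\<lambda>j. c * s j) \<in> CB L k r f" if L: "L \<in> \<L>" for L
  proof (cases "f \<in> interior L")
    case True
    then have "(\<Sum>j<k. s j * psi (transl L f) (r j)) \<ge> 1"
      using assms(1) L unfolding CFam_mem by blast
    then have "1 * 1 \<le> c * (\<Sum>j<k. s j * psi (transl L f) (r j))"
      using assms(2) by (intro mult_mono) auto
    moreover have "(\<Sum>j<k. c * s j * psi (transl L f) (r j)) = c * (\<Sum>j<k. s j * psi (transl L f) (r j))"
      by (simp add: sum_distrib_left mult.assoc)
    ultimately have "(\<Sum>j<k. c * s j * psi (transl L f) (r j)) \<ge> 1" by simp
    then show ?thesis using True co by (simp add: CB_def)
  next
    case False
    then show ?thesis using co by (simp add: CB_def)
  qed
  then show ?thesis using co by (simp add: CFam_def)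
qed

lemma valid_up:
  assumes "valid f \<B> \<L> a" "a \<le> a'"
  shows "valid f \<B> \<L> a'"
proof -
  have ap: "a > 0" using assms(1) by (simp add: valid_def)
  have a'p: "a' > 0" using ap assms(2) by simp
  have "CFam \<B> k r f \<subseteq> sscale (1 / a') (CFam \<L> k r f)" if k: "k \<ge> 1" for k r
  proof
    fix s assume s: "s \<in> CFam \<B> k r f"
    then have "s \<in> sscale (1 / a) (CFam \<L> k r f)" using assms(1) k by (auto simp: valid_def)
    then have t: "(\<lambda>j. a * s j) \<in> CFam \<L> k r f" using sscale_iff[OF ap] by blast
    have "(\<lambda>j. (a'/a) * (a * s j)) \<in> CFam \<L> k r f"
      using CFam_up[OF t, of "a'/a"] ap assms(2) by simp
    moreover have "(\<lambda>j. (a'/a) * (a * s j)) = (\<lambda>j. a' * s j)" using ap by auto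
    ultimately have "(\<lambda>j. a' * s j) \<in> CFam \<L> k r f" by simp
    then show "s \<in> sscale (1 / a') (CFam \<L> k r f)" using sscale_iff[OF a'p] by blast
  qed
  then show ?thesis using a'p by (simp add: valid_def)
qed

lemma valid_V:
  assumes "valid f \<B> \<L> a" "L \<in> \<L>" "f \<in> interior L"
    and k: "k \<ge> 1" and s: "s \<in> orth k" and lt: "(\<Sum>j<k. s j * psi (transl L f) (r j)) < 1 / a"
  shows "\<exists>B\<in>\<B>. f \<in> interior B \<and> (\<Sum>j<k. s j * psi (transl B f) (r j)) < 1"
proof (rule ccontr)
  assume H: "\<not> ?thesis"
  have ap: "a > 0" using assms(1) by (simp add: valid_def)
  have "s \<in> CB B k r f" if "B \<in> \<B>" for B
    using H that s by (auto simp: CB_def not_less)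
  then have "s \<in> CFam \<B> k r f" using s by (simp add: CFam_def)
  then have "s \<in> sscale (1/a) (CFam \<L> k r f)" using assms(1) k by (auto simp: valid_def)
  then have "(\<lambda>j. a * s j) \<in> CFam \<L> k r f" using sscale_iff[OF ap] by blast
  then have "(\<lambda>j. a * s j) \<in> CB L k r f" using assms(2) by (simp add: CFam_def)
  then have "(\<Sum>j<k. a * s j * psi (transl L f) (r j)) \<ge> 1" using assms(3) by (simp add: CB_def)
  moreover have "(\<Sum>j<k. a * s j * psi (transl L f) (r j)) = a * (\<Sum>j<k. s j * psi (transl L f) (r j))"
    by (simp add: sum_distrib_left mult.assoc)
  ultimately have "a * (\<Sum>j<k. s j * psi (transl L f) (r j)) \<ge> 1" by simp
  moreover have "a * (\<Sum>j<k. s j * psi (transl L f) (r j)) < a * (1/a)"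
    using lt ap by (intro mult_strict_left_mono) auto
  ultimately show False using ap by simp
qed

lemma shrink_compare:
  fixes L B :: "(real^'n) set"
  assumes sub: "shrink \<mu> L f \<subseteq> B" and fint: "f \<in> interior L" and mu: "\<mu> > 0" "\<mu> < 1"
    and cvB: "convex B" and cvL: "convex L"
  shows "f \<in> interior B" "psi (transl B f) x \<le> (1/\<mu>) * psi (transl L f) x"
proof -
  obtain e where e: "e > 0" "ball f e \<subseteq> L" using fint mem_interior by blast
  have "ball f (\<mu> * e) \<subseteq> B"
  proof
    fix z assume z: "z \<in> ball f (\<mu> * e)"
    define x where "x = f + (1/\<mu>) *\<^sub>R (z - f)"
    have "dist f x = norm (z - f) / \<mu>" using mu by (simp add: x_def dist_norm)
    also have "\<dots> < e" using z mu by (simp add: dist_norm norm_minus_commute divide_less_eq mult.commute)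
    finally have "x \<in> L" using e by auto
    moreover have "\<mu> *\<^sub>R x + (1 - \<mu>) *\<^sub>R f = z" using mu by (simp add: x_def algebra_simps)
    ultimately have "z \<in> shrink \<mu> L f" unfolding shrink_def
      using rev_image_eqI[of x L z "\<lambda>x. \<mu> *\<^sub>R x + (1 - \<mu>) *\<^sub>R f"] by simp
    then show "z \<in> B" using sub by blast
  qed
  moreover have "\<mu> * e > 0" using mu e by simp
  ultimately show fB: "f \<in> interior B" using mem_interior by blast
  obtain d where d: "d > 0" "ball 0 d \<subseteq> transl L f" using transl_ball[OF fint] by blast
  have ne: "pset (transl L f) x \<noteq> {}" using pset_nonempty[OF d(2,1)] by blast
  have "\<mu> * psi (transl B f) x \<le> l" if l: "l \<in> pset (transl L f) x" for l
  proof -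
    have lp: "l > 0" and xl: "(1/l) *\<^sub>R x \<in> transl L f" using l by (auto simp: pset_def mem_scale_iff)
    then have "(1/l) *\<^sub>R x + f \<in> L" using mem_transl by blast
    then have "\<mu> *\<^sub>R ((1/l) *\<^sub>R x + f) + (1 - \<mu>) *\<^sub>R f \<in> B" using sub unfolding shrink_def by blast
    moreover have "\<mu> *\<^sub>R ((1/l) *\<^sub>R x + f) + (1 - \<mu>) *\<^sub>R f = (\<mu>/l) *\<^sub>R x + f"
      by (simp add: algebra_simps)
    ultimately have "(\<mu>/l) *\<^sub>R x + f \<in> B" by simp
    then have "(\<mu>/l) *\<^sub>R x \<in> transl B f" using mem_transl[of "(\<mu>/l) *\<^sub>R x" B f] by simp
    moreover have "1 / (l/\<mu>) = \<mu>/l" by simp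
    ultimately have "l/\<mu> \<in> pset (transl B f) x" using lp mu by (simp add: pset_def mem_scale_iff)
    then have "psi (transl B f) x \<le> l/\<mu>" by (rule psi_le)
    then show ?thesis using mu by (simp add: field_simps)
  qed
  then have "\<mu> * psi (transl B f) x \<le> psi (transl L f) x"
    unfolding psi_pset[of "transl L f"] using ne by (intro cInf_greatest) auto
  then show "psi (transl B f) x \<le> (1/\<mu>) * psi (transl L f) x" using mu by (simp add: field_simps)
qed

lemma easy_valid:
  assumes B_sub: "\<B> \<subseteq> Cn" and L_sub: "\<L> \<subseteq> Cn"
    and mu: "0 < \<mu>" "\<mu> < 1"
    and H: "\<forall>L\<in>fam_at \<L> f. \<exists>B\<in>\<B>. shrink \<mu> L f \<subseteq> B"
  shows "valid f \<B> \<L> (1/\<mu>)"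
proof -
  have ap: "1/\<mu> > 0" using mu by simp
  have "CFam \<B> k r f \<subseteq> sscale (1 / (1/\<mu>)) (CFam \<L> k r f)" for k r
  proof
    fix s assume s: "s \<in> CFam \<B> k r f"
    have so: "s \<in> orth k" using s by (simp add: CFam_def)
    have co: "(\<lambda>j. (1/\<mu>) * s j) \<in> orth k" using so mu by (simp add: orth_def)
    have "(\<lambda>j. (1/\<mu>) * s j) \<in> CB L k r f" if L: "L \<in> \<L>" for L
    proof (cases "f \<in> interior L")
      case True
      then have "L \<in> fam_at \<L> f" using L by (simp add: fam_at_def)
      then obtain B where B: "B \<in> \<B>" "shrink \<mu> L f \<subseteq> B" using H by blast
      have cvB: "convex B" using B(1) B_sub by (auto simp: Cn_def)
      have cvL: "convex L" using L L_sub by (auto simp: Cn_def)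
      have fB: "f \<in> interior B" using shrink_compare[OF B(2) True mu cvB cvL] by blast
      have "(\<Sum>j<k. s j * psi (transl B f) (r j)) \<ge> 1" using s B(1) fB unfolding CFam_mem by blast
      also have "(\<Sum>j<k. s j * psi (transl B f) (r j)) \<le> (\<Sum>j<k. (1/\<mu>) * s j * psi (transl L f) (r j))"
      proof (rule sum_mono)
        fix j assume "j \<in> {..<k}"
        then have sj: "s j \<ge> 0" using so by (simp add: orth_def)
        have "psi (transl B f) (r j) \<le> (1/\<mu>) * psi (transl L f) (r j)"
          using shrink_compare[OF B(2) True mu cvB cvL] by blast
        then have "s j * psi (transl B f) (r j) \<le> s j * ((1/\<mu>) * psi (transl L f) (r j))"
          using sj by (rule mult_left_mono)
        then show "s j * psi (transl B f) (r j) \<le> (1/\<mu>) * s j * psi (transl L f) (r j)"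
          by (simp add: mult.assoc mult.left_commute)
      qed
      finally show ?thesis using True co by (simp add: CB_def)
    next
      case False
      then show ?thesis using co by (simp add: CB_def)
    qed
    then have "(\<lambda>j. (1/\<mu>) * s j) \<in> CFam \<L> k r f" using co by (simp add: CFam_def)
    then show "s \<in> sscale (1 / (1/\<mu>)) (CFam \<L> k r f)" using sscale_iff[OF ap] by blast
  qed
  then show ?thesis using ap by (simp add: valid_def)
qed

lemma hard_dir:
  fixes \<B> \<L> :: "(real^'n) set set" and m :: nat
  assumes B_sub: "\<B> \<subseteq> Cn"
    and L_poly: "\<forall>L\<in>\<L>. polyhedron L"
    and L_facets: "\<forall>L\<in>\<L>. card {F. F facet_of L} \<le> m"
    and fcl: "f_closed f \<B>" and va: "valid f \<B> \<L> a"
  shows "\<forall>L\<in>fam_at \<L> f. \<exists>B\<in>\<B>. shrink (1 / (2 * a * 2 ^ (m + 2 * CARD('n)) + 2)) L f \<subseteq> B"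
proof
  fix L assume "L \<in> fam_at \<L> f"
  then have L: "L \<in> \<L>" "f \<in> interior L" by (auto simp: fam_at_def)
  have ap: "a > 0" using va by (simp add: valid_def)
  show "\<exists>B\<in>\<B>. shrink (1 / (2 * a * 2 ^ (m + 2 * CARD('n)) + 2)) L f \<subseteq> B"
  proof (rule core[OF B_sub fcl _ _ L(2) ap])
    show "polyhedron L" using L_poly L(1) by blast
    show "card {F. F facet_of L} \<le> m" using L_facets L(1) by blast
    fix k r s assume "1 \<le> k" "s \<in> orth k" "(\<Sum>j<k. s j * psi (transl L f) (r j)) < 1 / a"
    then show "\<exists>B\<in>\<B>. f \<in> interior B \<and> (\<Sum>j<k. s j * psi (transl B f) (r j)) < 1"
      using valid_V[OF va L] by blast
  qed
qed

lemma mu_range: "a > 0 \<Longrightarrow> 0 < 1 / (2 * a * 2 ^ N + 2) \<and> 1 / (2 * a * 2 ^ N + 2) < (1::real)"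
proof -
  assume a: "a > 0"
  have "2 * a * 2 ^ N \<ge> 0" using a by simp
  then have "2 * a * 2 ^ N + 2 > 1" by linarith
  then show ?thesis by simp
qed

theorem theorem2p4:
  fixes \<B> \<L> :: "(real^'n) set set" and m :: nat
  assumes B_sub: "\<B> \<subseteq> Cn"
    and L_sub: "\<L> \<subseteq> Cn"
    and L_poly: "\<forall>L\<in>\<L>. polyhedron L"
    and L_facets: "\<forall>L\<in>\<L>. card {F. F facet_of L} \<le> m"
  shows "(\<forall>f. f \<notin> Zn \<and> f_closed f \<B> \<longrightarrow>
            (rho_f f \<B> \<L> < \<infinity> \<longleftrightarrow>
             (\<exists>\<mu>. 0 < \<mu> \<and> \<mu> < 1 \<and>
                (\<forall>L\<in>fam_at \<L> f. \<exists>B\<in>\<B>. shrink \<mu> L f \<subseteq> B))))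
       \<and> ((\<forall>f. f \<notin> Zn \<longrightarrow> f_closed f \<B>) \<longrightarrow>
            (rho \<B> \<L> < \<infinity> \<longleftrightarrow>
             (\<exists>\<mu>. 0 < \<mu> \<and> \<mu> < 1 \<and>
                (\<forall>f. f \<notin> Zn \<longrightarrow> (\<forall>L\<in>fam_at \<L> f. \<exists>B\<in>\<B>. shrink \<mu> L f \<subseteq> B)))))"
proof (intro conjI allI impI)
  fix f :: "real^'n"
  assume f: "f \<notin> Zn \<and> f_closed f \<B>"
  show "rho_f f \<B> \<L> < \<infinity> \<longleftrightarrow> (\<exists>\<mu>. 0 < \<mu> \<and> \<mu> < 1 \<and> (\<forall>L\<in>fam_at \<L> f. \<exists>B\<in>\<B>. shrink \<mu> L f \<subseteq> B))"
  proof
    assume "rho_f f \<B> \<L> < \<infinity>"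
    then obtain a where va: "valid f \<B> \<L> a" using rho_f_finite_iff by blast
    have ap: "a > 0" using va by (simp add: valid_def)
    show "\<exists>\<mu>. 0 < \<mu> \<and> \<mu> < 1 \<and> (\<forall>L\<in>fam_at \<L> f. \<exists>B\<in>\<B>. shrink \<mu> L f \<subseteq> B)"
      using hard_dir[OF B_sub L_poly L_facets _ va] f mu_range[OF ap] by blast
  next
    assume "\<exists>\<mu>. 0 < \<mu> \<and> \<mu> < 1 \<and> (\<forall>L\<in>fam_at \<L> f. \<exists>B\<in>\<B>. shrink \<mu> L f \<subseteq> B)"
    then obtain \<mu> where mu: "0 < \<mu>" "\<mu> < 1" and H: "\<forall>L\<in>fam_at \<L> f. \<exists>B\<in>\<B>. shrink \<mu> L f \<subseteq> B" by blast
    show "rho_f f \<B> \<L> < \<infinity>" using easy_valid[OF B_sub L_sub mu H] rho_f_finite_iff by blast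
  qed
next
  assume fc: "\<forall>f. f \<notin> Zn \<longrightarrow> f_closed f \<B>"
  show "rho \<B> \<L> < \<infinity> \<longleftrightarrow> (\<exists>\<mu>. 0 < \<mu> \<and> \<mu> < 1 \<and> (\<forall>f. f \<notin> Zn \<longrightarrow> (\<forall>L\<in>fam_at \<L> f. \<exists>B\<in>\<B>. shrink \<mu> L f \<subseteq> B)))"
  proof
    assume rl: "rho \<B> \<L> < \<infinity>"
    obtain R where R: "rho \<B> \<L> < ereal R"
    proof (cases "rho \<B> \<L>")
      case (real r) then show ?thesis using that[of "r + 1"] by simp
    next
      case PInf then show ?thesis using rl by simp
    next
      case MInf then show ?thesis using that[of 0] by simp
    qed
    have vR: "valid f \<B> \<L> R" if fZ: "f \<notin> Zn" for f
    proof -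
      have "rho_f f \<B> \<L> \<le> rho \<B> \<L>" unfolding rho_def using fZ by (intro SUP_upper) simp
      then have "Inf (ereal ` {a. valid f \<B> \<L> a}) < ereal R" using R unfolding rho_f_alt by simp
      then have "\<exists>y\<in>ereal ` {a. valid f \<B> \<L> a}. y < ereal R" by (simp only: Inf_less_iff)
      then obtain a where "valid f \<B> \<L> a" "a < R" by auto
      then show ?thesis using valid_up[of f \<B> \<L> a R] by simp
    qed
    have Rp: "R > 0"
    proof -
      obtain f :: "real^'n" where "f \<notin> Zn"
      proof
        show "(\<chi> i. 1/2) \<notin> Zn" by (simp add: Zn_def)
      qed
      then show ?thesis using vR by (simp add: valid_def)
    qed
    show "\<exists>\<mu>. 0 < \<mu> \<and> \<mu> < 1 \<and> (\<forall>f. f \<notin> Zn \<longrightarrow> (\<forall>L\<in>fam_at \<L> f. \<exists>B\<in>\<B>. shrink \<mu> L f \<subseteq> B))"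
    proof (intro exI conjI allI impI)
      show "0 < 1 / (2 * R * 2 ^ (m + 2 * CARD('n)) + 2)" "1 / (2 * R * 2 ^ (m + 2 * CARD('n)) + 2) < 1"
        using mu_range[OF Rp] by auto
      fix f :: "real^'n" assume fZ: "f \<notin> Zn"
      show "\<forall>L\<in>fam_at \<L> f. \<exists>B\<in>\<B>. shrink (1 / (2 * R * 2 ^ (m + 2 * CARD('n)) + 2)) L f \<subseteq> B"
        using hard_dir[OF B_sub L_poly L_facets _ vR[OF fZ]] fc fZ by blast
    qed
  next
    assume "\<exists>\<mu>. 0 < \<mu> \<and> \<mu> < 1 \<and> (\<forall>f. f \<notin> Zn \<longrightarrow> (\<forall>L\<in>fam_at \<L> f. \<exists>B\<in>\<B>. shrink \<mu> L f \<subseteq> B))"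
    then obtain \<mu> where mu: "0 < \<mu>" "\<mu> < 1"
      and H: "\<forall>f. f \<notin> Zn \<longrightarrow> (\<forall>L\<in>fam_at \<L> f. \<exists>B\<in>\<B>. shrink \<mu> L f \<subseteq> B)" by blast
    have "rho \<B> \<L> \<le> ereal (1/\<mu>)"
      unfolding rho_def
    proof (rule SUP_least)
      fix f :: "real^'n" assume "f \<in> UNIV - Zn"
      then have "\<forall>L\<in>fam_at \<L> f. \<exists>B\<in>\<B>. shrink \<mu> L f \<subseteq> B" using H by blast
      then show "rho_f f \<B> \<L> \<le> ereal (1/\<mu>)" using easy_valid[OF B_sub L_sub mu] rho_f_le by blast
    qed
    then show "rho \<B> \<L> < \<infinity>" by (rule le_less_trans) simp
  qed
qed

end
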